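(* Let $\varepsilon>0$ and $\delta\in(0,1)$. Define \[ n_1 = 1+\left\lfloor\frac{1}{\varepsilon}\ln\left(\frac{e^{\varepsilon}+2\delta-1}{(e^{\varepsilon}+1)\delta}\right)\right\rfloor, \] define $\pi_{\mathrm{opt}}(n)=\frac{e^{n\varepsilon}-1}{e^{\varepsilon}-1}\cdot\delta$ for integers $0\le n\le n_1$, and \[ n_2 = n_1 + \left\lfloor\frac{1}{\varepsilon}\ln\left(1+\frac{e^{\varepsilon}-1}{\delta}\left(1-\pi_{\mathrm{opt}}(n_1)\right)\right)\right\rfloor . \] For integers $n$ with $n_1<n\le n_2$, writing $m=n-n_1$, define \[ \pi_{\mathrm{opt}}(n)=\left(1-e^{-m\varepsilon}\right)\left(1+\frac{\delta}{e^{\varepsilon}-1}\right)+e^{-m\varepsilon}\pi_{\mathrm{opt}}(n_1), \] and define $\pi_{\mathrm{opt}}(n)=1$ for $n>n_2$. Then $\pi_{\mathrm{opt}}$ is an optimal partition selection primitive for $(\varepsilon,\delta)$-differential privacy.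
   Context: $\mathbb{N}=\{0,1,2,\dots\}$. A partition selection primitive is a function $\pi:\mathbb{N}\to[0,1]$ with $\pi(0)=0$; it is interpreted as: count the number $n$ of users in a partition and release (keep) the partition with probability $\pi(n)$, drop it otherwise. Let $\rho_\pi(n)$ be the random variable in $\{\mathrm{drop},\mathrm{keep}\}$ equal to keep with probability $\pi(n)$ and drop with probability $1-\pi(n)$. The primitive $\pi$ is $(\varepsilon,\delta)$-differentially private if for all $n,n'\in\mathbb{N}$ with $|n-n'|=1$ (adding or removing one user) and all $S\subseteq\{\mathrm{drop},\mathrm{keep}\}$, $\Pr[\rho_\pi(n)\in S]\le e^{\varepsilon}\Pr[\rho_\pi(n')\in S]+\delta$. A primitive $\pi_{\mathrm{opt}}$ is optimal for $(\varepsilon,\delta)$-DP if it is $(\varepsilon,\delta)$-differentially private and for every $(\varepsilon,\delta)$-differentially private partition selection primitive $\pi$ and every $n\in\mathbb{N}$, $\pi(n)\le\pi_{\mathrm{opt}}(n)$. *)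

theory Defs
  imports Complex_Main
begin

datatype outcome = Drop | Keep

definition is_primitive :: "(nat \<Rightarrow> real) \<Rightarrow> bool" where
  "is_primitive \<pi> \<longleftrightarrow> \<pi> 0 = 0 \<and> (\<forall>n. 0 \<le> \<pi> n \<and> \<pi> n \<le> 1)"

text \<open>Pr[rho_pi(n) in S]: keep with probability pi n, drop with probability 1 - pi n.\<close>
definition out_prob :: "(nat \<Rightarrow> real) \<Rightarrow> nat \<Rightarrow> outcome set \<Rightarrow> real" where
  "out_prob \<pi> n S = (\<Sum>r\<in>S. if r = Keep then \<pi> n else 1 - \<pi> n)"

definition is_dp :: "real \<Rightarrow> real \<Rightarrow> (nat \<Rightarrow> real) \<Rightarrow> bool" where
  "is_dp \<epsilon> \<delta> \<pi> \<longleftrightarrow> is_primitive \<pi> \<and>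
     (\<forall>n n'. \<bar>int n - int n'\<bar> = 1 \<longrightarrow>
        (\<forall>S. out_prob \<pi> n S \<le> exp \<epsilon> * out_prob \<pi> n' S + \<delta>))"

definition is_optimal :: "real \<Rightarrow> real \<Rightarrow> (nat \<Rightarrow> real) \<Rightarrow> bool" where
  "is_optimal \<epsilon> \<delta> \<pi>opt \<longleftrightarrow> is_dp \<epsilon> \<delta> \<pi>opt \<and>
     (\<forall>\<pi>. is_dp \<epsilon> \<delta> \<pi> \<longrightarrow> (\<forall>n. \<pi> n \<le> \<pi>opt n))"

definition n1 :: "real \<Rightarrow> real \<Rightarrow> int" where
  "n1 \<epsilon> \<delta> = 1 + \<lfloor>(1/\<epsilon>) * ln ((exp \<epsilon> + 2*\<delta> - 1) / ((exp \<epsilon> + 1) * \<delta>))\<rfloor>"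

definition pi_low :: "real \<Rightarrow> real \<Rightarrow> int \<Rightarrow> real" where
  "pi_low \<epsilon> \<delta> n = (exp (of_int n * \<epsilon>) - 1) / (exp \<epsilon> - 1) * \<delta>"

definition n2 :: "real \<Rightarrow> real \<Rightarrow> int" where
  "n2 \<epsilon> \<delta> = n1 \<epsilon> \<delta> + \<lfloor>(1/\<epsilon>) * ln (1 + (exp \<epsilon> - 1) / \<delta> * (1 - pi_low \<epsilon> \<delta> (n1 \<epsilon> \<delta>)))\<rfloor>"

definition pi_opt :: "real \<Rightarrow> real \<Rightarrow> nat \<Rightarrow> real" where
  "pi_opt \<epsilon> \<delta> n =
     (if int n \<le> n1 \<epsilon> \<delta> then pi_low \<epsilon> \<delta> (int n)
      else if int n \<le> n2 \<epsilon> \<delta> then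
        (let m = int n - n1 \<epsilon> \<delta> in
          (1 - exp (- (of_int m * \<epsilon>))) * (1 + \<delta> / (exp \<epsilon> - 1))
          + exp (- (of_int m * \<epsilon>)) * pi_low \<epsilon> \<delta> (n1 \<epsilon> \<delta>))
      else 1)"

end

theory Submission imports Defs
begin

lemma alg1: fixes a x d :: real assumes "a > 1" "x*(a+1) \<le> 1-d" shows "1 - x \<le> a*(1-(a*x+d)) + d"
proof -
  have "(a-1)*(x*(a+1)) \<le> (a-1)*(1-d)" using assms by (intro mult_left_mono) auto
  then show ?thesis by (simp add: algebra_simps)
qed
lemma alg2: fixes a y d :: real assumes "a > 1" "y \<le> 1 + d/(a-1)" shows "y \<le> 1 - (1-y-d)/a"
proof -
  have "(a-1)*y \<le> (a-1)*(1 + d/(a-1))" using assms by (intro mult_left_mono) auto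
  then have "(a-1)*y \<le> a - 1 + d" using assms by (simp add: field_simps)
  then show ?thesis using assms by (simp add: field_simps)
qed
lemma alg3: fixes a y d :: real assumes "a > 1" "(1-d)/(a+1) \<le> y" shows "1 - (1-y-d)/a \<le> a*y + d"
proof -
  have "1-d \<le> y*(a+1)" using assms by (simp add: divide_le_eq)
  then have "(a-1)*(1-d) \<le> (a-1)*(y*(a+1))" using assms by (intro mult_left_mono) auto
  then have "a - 1 + y + d \<le> a*(a*y+d)" by (simp add: algebra_simps)
  then show ?thesis using assms by (simp add: field_simps)
qed
lemma alg4: fixes a y d :: real assumes "a > 0" shows "1 - y \<le> a*(1 - (1 - (1-y-d)/a)) + d"
  using assms by simp
lemma alg5: fixes a y d :: real assumes "a > 0" "1 - (1-y-d)/a > 1" shows "y + d > 1"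
proof -
  have "(1-y-d)/a < 0" using assms by simp
  then show ?thesis using assms by (simp add: divide_less_0_iff)
qed

definition Yf :: "real \<Rightarrow> real \<Rightarrow> int \<Rightarrow> real" where
  "Yf e d m = (1 - exp (- (of_int m * e))) * (1 + d / (exp e - 1)) + exp (- (of_int m * e)) * pi_low e d (n1 e d)"

context
  fixes e d :: real
  assumes e: "0 < e" and d0: "0 < d" and d1: "d < 1"
begin

lemma a_gt1: "exp e > 1" using e by simp

lemma ap1: "exp e + 1 > 0" by (metis add_pos_pos exp_gt_zero zero_less_one)

lemma pl_step: "pi_low e d (k+1) = exp e * pi_low e d k + d"
proof -
  have "exp (of_int (k+1) * e) = exp (of_int k * e) * exp e"
    by (simp add: distrib_right exp_add)
  moreover have "exp e - 1 \<noteq> 0" using a_gt1 by simp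
  ultimately show ?thesis unfolding pi_low_def by (simp add: field_simps)
qed

lemma pl_nonneg: "0 \<le> k \<Longrightarrow> 0 \<le> pi_low e d k"
proof -
  assume "0 \<le> k"
  then have "exp (of_int k * e) \<ge> 1" using e by simp
  then show ?thesis unfolding pi_low_def using a_gt1 d0 by simp
qed

lemma pl_le_xs: "exp (of_int k * e) \<le> (exp e + 2*d - 1) / ((exp e + 1) * d) \<Longrightarrow> pi_low e d k \<le> (1-d)/(exp e + 1)"
proof -
  assume h: "exp (of_int k * e) \<le> (exp e + 2*d - 1) / ((exp e + 1) * d)"
  define t where "t = exp (of_int k * e)"
  define a where "a = exp e"
  have a: "a > 1" using a_gt1 a_def by simp
  have "t * ((a+1)*d) \<le> a + 2*d - 1" using h a d0 unfolding t_def[symmetric] a_def[symmetric]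
    by (simp add: pos_le_divide_eq)
  then have "(t - 1) * d * (a+1) \<le> (1-d) * (a-1)" by (simp add: algebra_simps)
  then have "(t - 1) / (a - 1) * d \<le> (1-d)/(a+1)" using a
    by (simp add: field_simps)
  then show ?thesis unfolding pi_low_def t_def a_def .
qed

lemma pl_gt_xs: "exp (of_int k * e) > (exp e + 2*d - 1) / ((exp e + 1) * d) \<Longrightarrow> pi_low e d k > (1-d)/(exp e + 1)"
proof -
  assume h: "exp (of_int k * e) > (exp e + 2*d - 1) / ((exp e + 1) * d)"
  define t where "t = exp (of_int k * e)"
  define a where "a = exp e"
  have a: "a > 1" using a_gt1 a_def by simp
  have "t * ((a+1)*d) > a + 2*d - 1" using h a d0 unfolding t_def[symmetric] a_def[symmetric]
    by (simp add: pos_divide_less_eq)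
  then have "(t - 1) * d * (a+1) > (1-d) * (a-1)" by (simp add: algebra_simps)
  then have "(t - 1) / (a - 1) * d > (1-d)/(a+1)" using a
    by (simp add: field_simps)
  then show ?thesis unfolding pi_low_def t_def a_def .
qed

lemma R_ge1: "(exp e + 2*d - 1) / ((exp e + 1) * d) \<ge> 1"
proof -
  have "(exp e + 1) * d \<le> exp e + 2*d - 1"
  proof -
    have "(exp e - 1) * d \<le> (exp e - 1) * 1" using a_gt1 d1 by (intro mult_left_mono) auto
    then show ?thesis by (simp add: algebra_simps)
  qed
  moreover have "(exp e + 1) * d > 0" using d0 ap1 by (intro mult_pos_pos) auto
  ultimately show ?thesis by simp
qed

lemma n1_facts: "exp (of_int (n1 e d - 1) * e) \<le> (exp e + 2*d - 1) / ((exp e + 1) * d)"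
  "exp (of_int (n1 e d) * e) > (exp e + 2*d - 1) / ((exp e + 1) * d)" "n1 e d \<ge> 1"
proof -
  define R where "R = (exp e + 2*d - 1) / ((exp e + 1) * d)"
  have R: "R \<ge> 1" using R_ge1 R_def by simp
  define z where "z = (1/e) * ln R"
  have z0: "z \<ge> 0" using R e z_def by simp
  have nz: "n1 e d = 1 + \<lfloor>z\<rfloor>" unfolding n1_def z_def R_def by simp
  have "of_int \<lfloor>z\<rfloor> * e \<le> z * e" using e by (simp add: mult_right_mono)
  also have "z * e = ln R" using e z_def by simp
  finally have "exp (of_int \<lfloor>z\<rfloor> * e) \<le> R" using R
    by (metis exp_le_cancel_iff exp_ln_iff less_le_trans zero_less_one)
  then show "exp (of_int (n1 e d - 1) * e) \<le> (exp e + 2*d - 1) / ((exp e + 1) * d)"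
    using nz R_def by simp
  have "z * e < (of_int \<lfloor>z\<rfloor> + 1) * e" using e by (simp add: mult_strict_right_mono)
  then have "ln R < of_int (n1 e d) * e" using e z_def nz by (simp add: add.commute)
  then have "R < exp (of_int (n1 e d) * e)" using R
    by (metis exp_less_cancel_iff exp_ln_iff less_le_trans zero_less_one)
  then show "exp (of_int (n1 e d) * e) > (exp e + 2*d - 1) / ((exp e + 1) * d)" using R_def by simp
  show "n1 e d \<ge> 1" using nz z0 by simp
qed

lemma P_gt_xs: "pi_low e d (n1 e d) > (1-d)/(exp e + 1)"
  using pl_gt_xs n1_facts(2) by blast

lemma P_lt1: "pi_low e d (n1 e d) < 1"
proof -
  have "pi_low e d (n1 e d) = exp e * pi_low e d (n1 e d - 1) + d"
    using pl_step[of "n1 e d - 1"] by simp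
  also have "\<dots> \<le> exp e * ((1-d)/(exp e + 1)) + d"
    using pl_le_xs[OF n1_facts(1)] a_gt1 by (intro add_right_mono mult_left_mono) auto
  also have "\<dots> < 1"
  proof -
    have "exp e * ((1-d)/(exp e + 1)) + d = (exp e + d) / (exp e + 1)"
      using ap1 by (simp add: field_simps)
    also have "\<dots> < 1" using d1 ap1 by (simp add: divide_less_eq)
    finally show ?thesis .
  qed
  finally show ?thesis .
qed

lemma P_nonneg: "pi_low e d (n1 e d) \<ge> 0" using pl_nonneg n1_facts(3) by simp


lemma Y0: "Yf e d 0 = pi_low e d (n1 e d)" unfolding Yf_def by simp

lemma Ystep: "Yf e d (m+1) = 1 - (1 - Yf e d m - d) / exp e"
proof -
  define s where "s = exp (- (of_int m * e))"
  have s1: "exp (- (of_int (m+1) * e)) = s / exp e"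
    unfolding s_def by (simp add: distrib_right exp_diff exp_minus field_simps)
  have "exp e - 1 \<noteq> 0" using a_gt1 by simp
  then show ?thesis unfolding Yf_def s1 s_def[symmetric] using a_gt1
    by (simp add: field_simps)
qed

lemma Ybounds: "0 \<le> m \<Longrightarrow> pi_low e d (n1 e d) \<le> Yf e d m \<and> Yf e d m \<le> 1 + d / (exp e - 1)"
proof -
  assume m: "0 \<le> m"
  define s where "s = exp (- (of_int m * e))"
  define L where "L = 1 + d / (exp e - 1)"
  define P where "P = pi_low e d (n1 e d)"
  have s0: "0 < s" "s \<le> 1" using m e unfolding s_def by auto
  have L: "L > P" using P_lt1 d0 a_gt1 unfolding L_def P_def
    by (smt (verit) divide_pos_pos)
  have Y: "Yf e d m = L - s * (L - P)" unfolding Yf_def s_def[symmetric] L_def[symmetric] P_def[symmetric]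
    by (simp add: algebra_simps)
  have "s * (L - P) \<le> 1 * (L - P)" using s0 L by (intro mult_right_mono) auto
  moreover have "s * (L - P) \<ge> 0" using s0 L by simp
  ultimately show ?thesis unfolding Y L_def[symmetric] P_def[symmetric] by simp
qed

lemma Yle1: "Yf e d m \<le> 1 \<longleftrightarrow> exp (of_int m * e) \<le> 1 + (exp e - 1) / d * (1 - pi_low e d (n1 e d))"
proof -
  define t where "t = exp (of_int m * e)"
  define a where "a = exp e"
  define P where "P = pi_low e d (n1 e d)"
  have t: "t > 0" unfolding t_def by simp
  have a: "a > 1" unfolding a_def using a_gt1 .
  have Y: "Yf e d m = (1 - 1/t) * (1 + d/(a-1)) + (1/t) * P"
    unfolding Yf_def t_def a_def P_def by (simp add: exp_minus inverse_eq_divide)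
  have "Yf e d m \<le> 1 \<longleftrightarrow> t * ((1 - 1/t) * (1 + d/(a-1)) + (1/t) * P) \<le> t * 1"
    unfolding Y using t by (simp only: mult_le_cancel_left_pos)
  also have "\<dots> \<longleftrightarrow> (t - 1) * (1 + d/(a-1)) + P \<le> t" using t by (simp add: algebra_simps)
  also have "\<dots> \<longleftrightarrow> (a-1) * ((t - 1) * (1 + d/(a-1)) + P) \<le> (a-1) * t" using a
    by (simp only: mult_le_cancel_left_pos diff_gt_0_iff_gt)
  also have "\<dots> \<longleftrightarrow> (t - 1) * (a - 1 + d) + (a-1) * P \<le> (a-1) * t"
  proof -
    have "(a-1) * ((t - 1) * (1 + d/(a-1)) + P) = (t - 1) * (a - 1 + d) + (a-1) * P"
      using a by (simp add: field_simps)
    then show ?thesis by simp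
  qed
  also have "\<dots> \<longleftrightarrow> t * d \<le> (a - 1) * (1 - P) + d" by (simp add: algebra_simps)
  also have "\<dots> \<longleftrightarrow> t \<le> 1 + (a - 1) / d * (1 - P)" using d0
    by (simp add: field_simps)
  finally show ?thesis unfolding t_def a_def P_def .
qed

lemma M_facts: "exp (of_int (n2 e d - n1 e d) * e) \<le> 1 + (exp e - 1) / d * (1 - pi_low e d (n1 e d))"
  "exp (of_int (n2 e d - n1 e d + 1) * e) > 1 + (exp e - 1) / d * (1 - pi_low e d (n1 e d))"
  "n2 e d - n1 e d \<ge> 0"
proof -
  define R where "R = 1 + (exp e - 1) / d * (1 - pi_low e d (n1 e d))"
  have R: "R \<ge> 1" using R_def P_lt1 a_gt1 d0 by simp
  define z where "z = (1/e) * ln R"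
  have z0: "z \<ge> 0" using R e z_def by simp
  have nz: "n2 e d - n1 e d = \<lfloor>z\<rfloor>" unfolding n2_def z_def R_def by simp
  have "of_int \<lfloor>z\<rfloor> * e \<le> z * e" using e by (simp add: mult_right_mono)
  also have "z * e = ln R" using e z_def by simp
  finally have "exp (of_int \<lfloor>z\<rfloor> * e) \<le> R" using R
    by (metis exp_le_cancel_iff exp_ln_iff less_le_trans zero_less_one)
  then show "exp (of_int (n2 e d - n1 e d) * e) \<le> 1 + (exp e - 1) / d * (1 - pi_low e d (n1 e d))"
    using nz R_def by simp
  have "z * e < (of_int \<lfloor>z\<rfloor> + 1) * e" using e by (simp add: mult_strict_right_mono)
  then have "ln R < of_int (n2 e d - n1 e d + 1) * e" using e z_def nz by (simp add: add.commute)
  then have "R < exp (of_int (n2 e d - n1 e d + 1) * e)" using R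
    by (metis exp_less_cancel_iff exp_ln_iff less_le_trans zero_less_one)
  then show "exp (of_int (n2 e d - n1 e d + 1) * e) > 1 + (exp e - 1) / d * (1 - pi_low e d (n1 e d))" using R_def by simp
  show "n2 e d - n1 e d \<ge> 0" using nz z0 by simp
qed

lemma Y_at: "n1 e d \<le> int n \<Longrightarrow> int n \<le> n2 e d \<Longrightarrow> pi_opt e d n = Yf e d (int n - n1 e d)"
proof -
  assume h: "n1 e d \<le> int n" "int n \<le> n2 e d"
  show ?thesis
  proof (cases "int n = n1 e d")
    case True then show ?thesis using Y0 unfolding pi_opt_def by simp
  next
    case False then show ?thesis using h unfolding pi_opt_def Yf_def Let_def by simp
  qed
qed


lemma axs: "exp e * ((1-d)/(exp e + 1)) + d < 1"
proof -
  have "exp e * ((1-d)/(exp e + 1)) + d = (exp e + d) / (exp e + 1)"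
    using ap1 by (simp add: field_simps)
  also have "\<dots> < 1" using d1 ap1 by (simp add: divide_less_eq)
  finally show ?thesis .
qed

lemma pi0: "pi_opt e d 0 = 0"
  using n1_facts(3) unfolding pi_opt_def pi_low_def by simp

lemma step: "pi_opt e d n \<le> pi_opt e d (Suc n) \<and> pi_opt e d (Suc n) \<le> 1
  \<and> pi_opt e d (Suc n) \<le> exp e * pi_opt e d n + d
  \<and> 1 - pi_opt e d n \<le> exp e * (1 - pi_opt e d (Suc n)) + d
  \<and> (pi_opt e d (Suc n) = 1 \<or> pi_opt e d (Suc n) = exp e * pi_opt e d n + d
       \<or> pi_opt e d (Suc n) = 1 - (1 - pi_opt e d n - d) / exp e)"
proof -
  define a where "a = exp e"
  have a: "a > 1" using a_gt1 a_def by simp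
  have M0: "n2 e d \<ge> n1 e d" using M_facts(3) by simp
  consider (A) "int n + 1 \<le> n1 e d" | (B) "n1 e d \<le> int n" "int n + 1 \<le> n2 e d"
    | (C1) "int n = n2 e d" | (C2) "int n > n2 e d" using M0 by linarith
  then show ?thesis
  proof cases
    case A
    define x where "x = pi_low e d (int n)"
    have pn: "pi_opt e d n = x" using A unfolding pi_opt_def x_def by simp
    have pSn: "pi_opt e d (Suc n) = a * x + d" using A pl_step[of "int n"]
      unfolding pi_opt_def x_def a_def by (simp add: add.commute)
    have x0: "x \<ge> 0" using pl_nonneg x_def by simp
    have "exp (of_int (int n) * e) \<le> exp (of_int (n1 e d - 1) * e)"
      using A e by simp
    then have "exp (of_int (int n) * e) \<le> (exp e + 2*d - 1) / ((exp e + 1) * d)"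
      using n1_facts(1) by linarith
    then have "x \<le> (1-d)/(a+1)" using pl_le_xs x_def a_def by blast
    then have xs: "x * (a+1) \<le> 1 - d" using a by (simp add: le_divide_eq)
    have "a * x \<le> a * ((1-d)/(a+1))" using \<open>x \<le> (1-d)/(a+1)\<close> a by (intro mult_left_mono) auto
    then have le1: "a * x + d \<le> 1" using axs a_def by simp
    have "x \<le> a * x + d" using x0 a d0 by (smt (verit) mult_le_cancel_right1 mult.commute)
    then show ?thesis unfolding pn pSn a_def[symmetric] using le1 alg1[OF a xs] by simp
  next
    case B
    define y where "y = Yf e d (int n - n1 e d)"
    have pn: "pi_opt e d n = y" using B Y_at y_def by simp
    have pSn: "pi_opt e d (Suc n) = 1 - (1 - y - d) / a" using B Y_at[of "Suc n"] Ystep[of "int n - n1 e d"]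
      unfolding y_def a_def by (simp add: algebra_simps)
    have yb: "pi_low e d (n1 e d) \<le> y" "y \<le> 1 + d / (a - 1)" using Ybounds[of "int n - n1 e d"] B
      unfolding y_def a_def by auto
    have yxs: "(1-d)/(a+1) \<le> y" using yb(1) P_gt_xs a_def by simp
    have "exp (of_int (int n - n1 e d + 1) * e) \<le> exp (of_int (n2 e d - n1 e d) * e)"
      using B e by simp
    then have "exp (of_int (int n - n1 e d + 1) * e) \<le> 1 + (exp e - 1) / d * (1 - pi_low e d (n1 e d))"
      using M_facts(1) by linarith
    then have "Yf e d (int n - n1 e d + 1) \<le> 1" using Yle1 by blast
    then have le1: "1 - (1 - y - d) / a \<le> 1" using Ystep y_def a_def by simp
    show ?thesis unfolding pn pSn a_def[symmetric]
      using le1 alg2[OF a yb(2)] alg3[OF a yxs] alg4[of a y d] a by simp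
  next
    case C1
    define y where "y = Yf e d (n2 e d - n1 e d)"
    have pn: "pi_opt e d n = y" using C1 Y_at y_def M0 by simp
    have pSn: "pi_opt e d (Suc n) = 1" using C1 M0 unfolding pi_opt_def by simp
    have y0: "y \<ge> 0" using Ybounds[of "n2 e d - n1 e d"] M0 P_nonneg y_def by simp
    have y1: "y \<le> 1" using Yle1 M_facts(1) y_def by simp
    have "\<not> Yf e d (n2 e d - n1 e d + 1) \<le> 1" using Yle1 M_facts(2) by simp
    then have "1 - (1 - y - d) / a > 1" using Ystep y_def a_def by simp
    then have yd: "y + d > 1" using alg5[of a y d] a by simp
    have "y \<le> a * y" using y0 a by (simp add: mult_le_cancel_right1 mult.commute)
    then show ?thesis unfolding pn pSn a_def[symmetric] using y1 yd by simp
  next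
    case C2
    have "pi_opt e d n = 1" "pi_opt e d (Suc n) = 1" using C2 M0 unfolding pi_opt_def by auto
    then show ?thesis unfolding a_def[symmetric] using a d0 by simp
  qed
qed

end

lemma out_prob_cases: "out_prob p n S = (if Keep \<in> S then p n else 0) + (if Drop \<in> S then 1 - p n else 0)"
proof -
  have "S \<subseteq> {Drop, Keep}" using outcome.exhaust by blast
  then have "S \<in> Pow {Drop, Keep}" by simp
  then have "S = {} \<or> S = {Drop} \<or> S = {Keep} \<or> S = {Drop, Keep}" by (auto simp: Pow_insert)
  then show ?thesis unfolding out_prob_def by auto
qed

lemma dp_necessary:
  assumes "is_dp e d p"
  shows "p (Suc n) \<le> exp e * p n + d" "1 - p n \<le> exp e * (1 - p (Suc n)) + d" "p (Suc n) \<le> 1"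
proof -
  have h: "\<And>n n' S. \<bar>int n - int n'\<bar> = 1 \<Longrightarrow> out_prob p n S \<le> exp e * out_prob p n' S + d"
    using assms unfolding is_dp_def by blast
  show "p (Suc n) \<le> exp e * p n + d" using h[of "Suc n" n "{Keep}"] by (simp add: out_prob_cases)
  show "1 - p n \<le> exp e * (1 - p (Suc n)) + d" using h[of n "Suc n" "{Drop}"] by (simp add: out_prob_cases)
  show "p (Suc n) \<le> 1" using assms unfolding is_dp_def is_primitive_def by blast
qed

theorem theorem1:
  fixes \<epsilon> \<delta> :: real
  assumes "\<epsilon> > 0" and "0 < \<delta>" and "\<delta> < 1"
  shows "is_optimal \<epsilon> \<delta> (pi_opt \<epsilon> \<delta>)"
proof -
  note st = step[OF assms]
  define q where "q = pi_opt \<epsilon> \<delta>"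
  define a where "a = exp \<epsilon>"
  have a: "a \<ge> 1" using assms a_def by simp
  have q0: "q 0 = 0" using pi0[OF assms] q_def by simp
  have qmono: "q n \<le> q (Suc n)" for n using st q_def by blast
  have qnn: "q n \<ge> 0" for n
    by (induction n) (use q0 qmono in \<open>auto intro: order_trans\<close>)
  have q1: "q n \<le> 1" for n
    using st q0 q_def by (cases n) auto
  have qs: "q (Suc n) \<le> a * q n + \<delta>" "1 - q n \<le> a * (1 - q (Suc n)) + \<delta>"
    "q (Suc n) = 1 \<or> q (Suc n) = a * q n + \<delta> \<or> q (Suc n) = 1 - (1 - q n - \<delta>) / a" for n
    using st[of n] q_def a_def by auto
  have prim: "is_primitive q" unfolding is_primitive_def using q0 qnn q1 by auto
  have dp: "is_dp \<epsilon> \<delta> q"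
    unfolding is_dp_def
  proof (intro conjI prim allI impI)
    fix n n' S
    assume "\<bar>int n - int n'\<bar> = 1"
    then consider "n' = Suc n" | "n = Suc n'" by linarith
    then show "out_prob q n S \<le> exp \<epsilon> * out_prob q n' S + \<delta>"
    proof cases
      case 1
      have k: "q n \<le> a * q n' + \<delta>"
      proof -
        have "q n \<le> q n'" using qmono 1 by simp
        also have "\<dots> \<le> a * q n'" using a qnn[of n'] by (simp add: mult_le_cancel_right1 mult.commute)
        finally show ?thesis using assms by simp
      qed
      have dr: "1 - q n \<le> a * (1 - q n') + \<delta>" using qs(2)[of n] 1 by simp
      have b: "1 \<le> a + \<delta>" using a assms by simp
      have "a * (q n' + (1 - q n')) = a" by simp
      then show ?thesis unfolding a_def[symmetric] out_prob_cases using k dr b assms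
        by (auto simp: algebra_simps)
    next
      case 2
      have k: "q n \<le> a * q n' + \<delta>" using qs(1)[of n'] 2 by simp
      have dr: "1 - q n \<le> a * (1 - q n') + \<delta>"
      proof -
        have "1 - q n \<le> 1 - q n'" using qmono 2 by simp
        also have "\<dots> \<le> a * (1 - q n')" using a q1[of n'] by (simp add: mult_le_cancel_right1 mult.commute)
        finally show ?thesis using assms by simp
      qed
      have b: "1 \<le> a + \<delta>" using a assms by simp
      have "a * (q n' + (1 - q n')) = a" by simp
      then show ?thesis unfolding a_def[symmetric] out_prob_cases using k dr b assms
        by (auto simp: algebra_simps)
    qed
  qed
  have opt: "p n \<le> q n" if hp: "is_dp \<epsilon> \<delta> p" for p n
  proof (induction n)
    case 0
    then show ?case using hp q0 unfolding is_dp_def is_primitive_def by simp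
  next
    case (Suc n)
    note nec = dp_necessary[OF hp, of n, folded a_def]
    have a0: "a > 0" using a by simp
    from qs(3)[of n] show ?case
    proof (elim disjE)
      assume "q (Suc n) = 1" then show ?thesis using nec(3) by simp
    next
      assume "q (Suc n) = a * q n + \<delta>"
      moreover have "a * p n \<le> a * q n" using Suc a0 by simp
      ultimately show ?thesis using nec(1) by simp
    next
      assume eq: "q (Suc n) = 1 - (1 - q n - \<delta>) / a"
      have "1 - q n \<le> a * (1 - p (Suc n)) + \<delta>" using nec(2) Suc by simp
      then have "1 - q n - \<delta> \<le> (1 - p (Suc n)) * a" by (simp add: algebra_simps)
      then have "(1 - q n - \<delta>) / a \<le> 1 - p (Suc n)" using a0 by (simp add: pos_divide_le_eq)
      then show ?thesis unfolding eq by simp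
    qed
  qed
  show ?thesis unfolding is_optimal_def q_def[symmetric] using dp opt by blast
qed

end
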